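(* Let $R$ be a commutative ring with unity. If $r\in R$ is B-irreducible, then $r$ is F-irreducible.
   Context: A non-zero, non-unit element $r\in R$ is called B-irreducible if the principal ideal $(r)$ is a maximal element, with respect to inclusion, of the set of all proper principal ideals of $R$. A factorization of $r$ is an expression $r=a_1\cdots a_n$ with $a_i\in R$; a refinement of this factorization is a factorization obtained by replacing one or more of the factors $a_i$ by a factorization of $a_i$. A non-unit element $r\in R$ is called F-irreducible if every factorization of $r$ has a refinement in which $r$ appears as one of the new factors. *)

theory Defs
  imports Main
begin

definition pideal :: "'a::comm_ring_1 \<Rightarrow> 'a set" where
  "pideal r = {r * x | x. True}"

definition B_irreducible :: "'a::comm_ring_1 \<Rightarrow> bool" where
  "B_irreducible r \<longleftrightarrow> r \<noteq> 0 \<and> \<not> r dvd 1 \<and>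
     (\<forall>a. pideal r \<subseteq> pideal a \<and> pideal a \<noteq> UNIV \<longrightarrow> pideal a = pideal r)"

text \<open>A refinement of the factorization as replaces each factor as!i by a factorization
  bs!i of it (leaving a factor unchanged corresponds to the one-factor factorization);
  the refined factorization is concat bs.\<close>
definition is_refinement :: "'a::comm_ring_1 list list \<Rightarrow> 'a list \<Rightarrow> bool" where
  "is_refinement bs as \<longleftrightarrow> list_all2 (\<lambda>b a. prod_list b = a) bs as"

definition F_irreducible :: "'a::comm_ring_1 \<Rightarrow> bool" where
  "F_irreducible r \<longleftrightarrow> \<not> r dvd 1 \<and>
     (\<forall>as. prod_list as = r \<longrightarrow>
        (\<exists>bs. is_refinement bs as \<and> (\<exists>i < length bs. r \<in> set (bs ! i))))"

end

theory Submission
  imports Defs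
begin

lemma prod_units: "(\<forall>a\<in>set as. (a::'a::comm_ring_1) dvd 1) \<Longrightarrow> prod_list as dvd 1"
  by (induction as) (simp_all add: mult_dvd_mono[of _ 1 _ 1, simplified])

lemma dvd_prod_list: "(a::'a::comm_ring_1) \<in> set as \<Longrightarrow> a dvd prod_list as"
  by (induction as) auto

lemma pideal_sub: "(r::'a::comm_ring_1) \<in> pideal a \<Longrightarrow> pideal r \<subseteq> pideal a"
  unfolding pideal_def by (auto simp: mult.assoc)

lemma pideal_self: "(r::'a::comm_ring_1) \<in> pideal r"
  unfolding pideal_def by (auto intro: exI[of _ 1])

lemma pideal_UNIV: "pideal (a::'a::comm_ring_1) = UNIV \<Longrightarrow> a dvd 1"
proof -
  assume "pideal a = UNIV"
  then have "(1::'a) \<in> pideal a" by simp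
  then obtain x where "1 = a * x" unfolding pideal_def by auto
  then show ?thesis by (rule dvdI)
qed

theorem mainTheorem3:
  fixes r :: "'a::comm_ring_1"
  assumes "B_irreducible r"
  shows "F_irreducible r"
  unfolding F_irreducible_def
proof (intro conjI allI impI)
  have nu: "\<not> r dvd 1" and max: "\<And>a. pideal r \<subseteq> pideal a \<Longrightarrow> pideal a \<noteq> UNIV \<Longrightarrow> pideal a = pideal r"
    using assms unfolding B_irreducible_def by auto
  show "\<not> r dvd 1" by fact
  fix as assume p: "prod_list as = r"
  have "\<exists>a\<in>set as. \<not> a dvd 1" using prod_units[of as] p nu by blast
  then obtain i where i: "i < length as" "\<not> as ! i dvd 1" by (metis in_set_conv_nth)
  define a where "a = as ! i"
  have "a dvd r" using dvd_prod_list[of a as] p i a_def by auto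
  then have "r \<in> pideal a" unfolding pideal_def by (auto simp: dvd_def)
  then have "pideal r \<subseteq> pideal a" by (rule pideal_sub)
  moreover have "pideal a \<noteq> UNIV" using pideal_UNIV i(2) a_def by blast
  ultimately have "pideal a = pideal r" by (rule max)
  then have "a \<in> pideal r" using pideal_self by blast
  then obtain x where x: "a = r * x" unfolding pideal_def by auto
  define bs where "bs = (map (\<lambda>a. [a]) as)[i := [r, x]]"
  have "is_refinement bs as"
    unfolding is_refinement_def list_all2_conv_all_nth
  proof (intro conjI allI impI)
    show "length bs = length as" by (simp add: bs_def)
    fix j assume "j < length bs"
    then show "prod_list (bs ! j) = as ! j" using i x a_def
      by (cases "j = i") (simp_all add: bs_def)
  qed
  moreover have "i < length bs \<and> r \<in> set (bs ! i)" using i by (simp add: bs_def)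
  ultimately show "\<exists>bs. is_refinement bs as \<and> (\<exists>i<length bs. r \<in> set (bs ! i))" by blast
qed

end
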